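(* Let $P$ be any transition matrix on the finite set $S$ for which $\pi$ is a stationary distribution, i.e. $\pi(y)=\sum_x\pi(x)P(x,y)$ for all $y$. Let $\pi_{\max}=\max_x\pi(x)$. Then $\mathrm{trace}(P)=\sum_x P(x,x)\ge\max\big(0,(2\pi_{\max}-1)/\pi_{\max}\big)$. Furthermore, any $P$ attaining this minimum value has at most one non-zero diagonal entry, and any such non-zero diagonal entry is $P(x^*,x^* )$ for a state $x^*$ with $\pi(x^* )=\pi_{\max}>1/2$.
   Context: $S$ is a finite set, and $\pi$ is a probability distribution on $S$ with $\pi(x)>0$ for all $x$. A transition matrix has nonnegative entries with rows summing to $1$. *)

theory Defs
  imports Main "HOL-Analysis.Analysis"
begin

definition prob_dist_on :: "'a set \<Rightarrow> ('a \<Rightarrow> real) \<Rightarrow> bool" where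
  "prob_dist_on S \<pi> \<longleftrightarrow> (\<forall>x\<in>S. \<pi> x > 0) \<and> (\<Sum>x\<in>S. \<pi> x) = 1"

definition transition_matrix :: "'a set \<Rightarrow> ('a \<Rightarrow> 'a \<Rightarrow> real) \<Rightarrow> bool" where
  "transition_matrix S P \<longleftrightarrow> (\<forall>x\<in>S. \<forall>y\<in>S. P x y \<ge> 0) \<and> (\<forall>x\<in>S. (\<Sum>y\<in>S. P x y) = 1)"

definition stationary :: "'a set \<Rightarrow> ('a \<Rightarrow> real) \<Rightarrow> ('a \<Rightarrow> 'a \<Rightarrow> real) \<Rightarrow> bool" where
  "stationary S \<pi> P \<longleftrightarrow> (\<forall>y\<in>S. \<pi> y = (\<Sum>x\<in>S. \<pi> x * P x y))"

definition trace_on :: "'a set \<Rightarrow> ('a \<Rightarrow> 'a \<Rightarrow> real) \<Rightarrow> real" where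
  "trace_on S P = (\<Sum>x\<in>S. P x x)"

end

theory Submission
  imports Defs
begin

theorem lemma4:
  fixes S :: "'a set" and \<pi> :: "'a \<Rightarrow> real" and P :: "'a \<Rightarrow> 'a \<Rightarrow> real"
  assumes "finite S" and "S \<noteq> {}"
    and "prob_dist_on S \<pi>"
    and "transition_matrix S P"
    and "stationary S \<pi> P"
  defines "\<pi>max \<equiv> Max (\<pi> ` S)"
  shows "trace_on S P \<ge> max 0 ((2 * \<pi>max - 1) / \<pi>max)
         \<and> (trace_on S P = max 0 ((2 * \<pi>max - 1) / \<pi>max) \<longrightarrow>
           (\<forall>x\<in>S. \<forall>y\<in>S. P x x \<noteq> 0 \<and> P y y \<noteq> 0 \<longrightarrow> x = y)
         \<and> (\<forall>x\<in>S. P x x \<noteq> 0 \<longrightarrow> \<pi> x = \<pi>max \<and> \<pi>max > 1/2))"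
proof -
  have fin: "finite S" and ne: "S \<noteq> {}" by fact+
  have pos: "\<And>x. x \<in> S \<Longrightarrow> \<pi> x > 0" and sum1: "(\<Sum>x\<in>S. \<pi> x) = 1"
    using assms(3) unfolding prob_dist_on_def by auto
  have Pnn: "\<And>x y. x \<in> S \<Longrightarrow> y \<in> S \<Longrightarrow> P x y \<ge> 0"
    and Prow: "\<And>x. x \<in> S \<Longrightarrow> (\<Sum>y\<in>S. P x y) = 1"
    using assms(4) unfolding transition_matrix_def by auto
  have stat: "\<And>y. y \<in> S \<Longrightarrow> \<pi> y = (\<Sum>x\<in>S. \<pi> x * P x y)"
    using assms(5) unfolding stationary_def by auto
  have "\<pi>max \<in> \<pi> ` S" unfolding \<pi>max_def using fin ne by (intro Max_in) auto
  then obtain z where zS: "z \<in> S" and zmax: "\<pi> z = \<pi>max" by auto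
  have pmpos: "\<pi>max > 0" using pos zS zmax by auto
  have Ple1: "P x y \<le> 1" if "x \<in> S" "y \<in> S" for x y
  proof -
    have "P x y = (\<Sum>y\<in>{y}. P x y)" by simp
    also have "\<dots> \<le> (\<Sum>y\<in>S. P x y)" using that fin Pnn by (intro sum_mono2) auto
    finally show ?thesis using Prow that by simp
  qed
  have "\<pi>max = (\<Sum>x\<in>S. \<pi> x * P x z)" using stat zS zmax by simp
  also have "\<dots> = \<pi> z * P z z + (\<Sum>x\<in>S-{z}. \<pi> x * P x z)"
    using fin zS by (simp add: sum.remove)
  also have "(\<Sum>x\<in>S-{z}. \<pi> x * P x z) \<le> (\<Sum>x\<in>S-{z}. \<pi> x)"
    using Ple1 pos zS by (intro sum_mono) (simp add: mult_left_le less_imp_le)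
  also have "(\<Sum>x\<in>S-{z}. \<pi> x) = 1 - \<pi>max"
    using sum1 fin zS zmax by (simp add: sum_diff1)
  finally have "\<pi>max \<le> \<pi>max * P z z + (1 - \<pi>max)" using zmax by simp
  hence Pz: "P z z \<ge> (2 * \<pi>max - 1) / \<pi>max" using pmpos
    by (simp add: divide_le_eq algebra_simps)
  have tr: "trace_on S P = P z z + (\<Sum>x\<in>S-{z}. P x x)"
    unfolding trace_on_def using fin zS by (simp add: sum.remove)
  have restnn: "(\<Sum>x\<in>S-{z}. P x x) \<ge> 0" using Pnn by (intro sum_nonneg) auto
  have Pzz: "P z z \<ge> 0" using Pnn zS by auto
  have part1: "trace_on S P \<ge> max 0 ((2 * \<pi>max - 1) / \<pi>max)"
    using tr restnn Pz Pzz by simp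
  have part2: "(\<forall>x\<in>S. \<forall>y\<in>S. P x x \<noteq> 0 \<and> P y y \<noteq> 0 \<longrightarrow> x = y)
         \<and> (\<forall>x\<in>S. P x x \<noteq> 0 \<longrightarrow> \<pi> x = \<pi>max \<and> \<pi>max > 1/2)"
    if eq: "trace_on S P = max 0 ((2 * \<pi>max - 1) / \<pi>max)"
  proof (cases "\<pi>max > 1/2")
    case True
    hence "(2 * \<pi>max - 1) / \<pi>max > 0" using pmpos by simp
    hence "(\<Sum>x\<in>S-{z}. P x x) = 0" using eq tr Pz restnn by simp
    hence z0: "\<forall>x\<in>S-{z}. P x x = 0" using fin Pnn by (subst (asm) sum_nonneg_eq_0_iff) auto
    show ?thesis using z0 True zmax by blast
  next
    case False
    hence "(2 * \<pi>max - 1) / \<pi>max \<le> 0" using pmpos by (simp add: divide_le_0_iff)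
    hence "trace_on S P = 0" using eq by simp
    hence "(\<Sum>x\<in>S. P x x) = 0" unfolding trace_on_def .
    hence "\<forall>x\<in>S. P x x = 0" using fin Pnn by (subst (asm) sum_nonneg_eq_0_iff) auto
    thus ?thesis by blast
  qed
  show ?thesis using part1 part2 by blast
qed

end
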